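(* For every $r\in\mathbb{N}$, $0\le l\le r-1$ and $z\in\mathbb{C}$, $\lim_{q\uparrow1}P^l_{q,r}(z)=P^l_r(z)$.
   Context: $0<q<1$, $[w]_q:=(1-q^w)/(1-q)$, $[n]_q!:=[n]_q\cdots[1]_q$. For $0\le l\le r-2$, $P^l_{q,r}(z):=\frac{(-1)^{r-1-l}}{[r-1]_q!}\sum_{1\le m_1<\cdots<m_{r-1-l}\le r-1}q^{m_1+\cdots+m_{r-1-l}}[z-m_1]_q\cdots[z-m_{r-1-l}]_q$, and $P^{r-1}_{q,r}(z):=1/[r-1]_q!$. The Stirling numbers of the first kind $s(l,j)$ are defined by $x(x+1)\cdots(x+l-1)=\sum_{j=0}^l s(l,j)x^j$, and $P^l_r(z):=\frac{1}{(r-1)!}\sum_{j=l}^{r-1}\binom{j}{l}s(r,j+1)(-z)^{j-l}$. *)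

theory Defs
  imports "HOL-Analysis.Analysis" "HOL-Combinatorics.Stirling"
begin

definition qnum :: "real \<Rightarrow> complex \<Rightarrow> complex" where
  "qnum q w = (1 - (complex_of_real q) powr w) / (1 - complex_of_real q)"

definition qfact :: "real \<Rightarrow> nat \<Rightarrow> complex" where
  "qfact q n = (\<Prod>k=1..n. qnum q (of_nat k))"

text \<open>P^l_{q,r}(z): the sum over 1 <= m_1 < ... < m_{r-1-l} <= r-1 is a sum over
  subsets S of {1..r-1} of cardinality r-1-l.\<close>
definition Pq :: "real \<Rightarrow> nat \<Rightarrow> nat \<Rightarrow> complex \<Rightarrow> complex" where
  "Pq q r l z =
     (if l = r - 1 then 1 / qfact q (r - 1)
      else (-1) ^ (r - 1 - l) / qfact q (r - 1) *
        (\<Sum>S\<in>{S. S \<subseteq> {1..r-1} \<and> card S = r - 1 - l}.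
            complex_of_real (q ^ (\<Sum>S)) * (\<Prod>m\<in>S. qnum q (z - of_nat m))))"

text \<open>P^l_r(z), with s(r,j+1) the (unsigned) Stirling numbers of the first kind.\<close>
definition Pclass :: "nat \<Rightarrow> nat \<Rightarrow> complex \<Rightarrow> complex" where
  "Pclass r l z = 1 / of_nat (fact (r - 1)) *
     (\<Sum>j=l..r-1. of_nat (j choose l) * of_nat (stirling r (j + 1)) * (- z) ^ (j - l))"

end

theory Submission
  imports Defs
begin

lemma qnum_lim: "((\<lambda>q. qnum q w) \<longlongrightarrow> w) (at_left (1::real))"
proof -
  have "(1::complex) \<notin> \<real>\<^sub>\<le>\<^sub>0" by (simp add: nonpos_Reals_def)
  then have d: "((\<lambda>y. (y powr w - 1 powr w) / (y - 1)) \<longlongrightarrow> w * 1 powr (w - 1)) (at (1::complex))"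
    using has_field_derivative_powr[of 1 w] by (simp add: has_field_derivative_iff)
  have f: "filterlim (\<lambda>q. complex_of_real q) (at 1) (at_left (1::real))"
  proof (rule filterlim_atI)
    have "((\<lambda>q. complex_of_real q) \<longlongrightarrow> complex_of_real 1) (at_left 1)"
      by (intro tendsto_of_real tendsto_ident_at)
    then show "((\<lambda>q. complex_of_real q) \<longlongrightarrow> 1) (at_left 1)" by simp
    show "\<forall>\<^sub>F x in at_left 1. complex_of_real x \<noteq> 1"
      by (auto simp: eventually_at_filter)
  qed
  have "((\<lambda>q. (complex_of_real q powr w - 1 powr w) / (complex_of_real q - 1)) \<longlongrightarrow> w * 1 powr (w - 1)) (at_left (1::real))"
    by (rule filterlim_compose[OF d f])
  moreover have "(\<lambda>q. (complex_of_real q powr w - 1 powr w) / (complex_of_real q - 1)) = (\<lambda>q. qnum q w)"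
  proof
    fix q :: real
    have "(complex_of_real q powr w - 1) / (complex_of_real q - 1) = (1 - complex_of_real q powr w) / (1 - complex_of_real q)"
      by (metis minus_diff_eq minus_divide_divide)
    then show "(complex_of_real q powr w - 1 powr w) / (complex_of_real q - 1) = qnum q w"
      unfolding qnum_def by simp
  qed
  ultimately show ?thesis by simp
qed

lemma poch_stir:
  fixes y :: complex
  shows "pochhammer (y+1) n = (\<Sum>j\<le>n. of_nat (stirling (Suc n) (Suc j)) * y^j)"
proof (cases "y = 0")
  case True
  have "(\<Sum>j\<le>n. of_nat (stirling (Suc n) (Suc j)) * y^j) = (of_nat (stirling (Suc n) (Suc 0)) :: complex)"
    using True by (simp add: sum.atMost_shift del: stirling.simps)
  then show ?thesis using True by (simp add: stirling_Suc_n_1 pochhammer_fact[symmetric] del: stirling.simps)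
next
  case False
  have "y * pochhammer (y+1) n = pochhammer y (Suc n)" by (simp add: pochhammer_rec)
  also have "\<dots> = (\<Sum>k\<le>Suc n. of_nat (stirling (Suc n) k) * y^k)" by (rule stirling_pochhammer[symmetric])
  also have "\<dots> = (\<Sum>j\<le>n. of_nat (stirling (Suc n) (Suc j)) * y^(Suc j))"
    by (subst sum.atMost_shift) (simp add: lessThan_Suc_atMost del: stirling.simps)
  also have "\<dots> = y * (\<Sum>j\<le>n. of_nat (stirling (Suc n) (Suc j)) * y^j)"
    by (simp add: sum_distrib_left mult.assoc mult.left_commute del: stirling.simps)
  finally show ?thesis using False by simp
qed

lemma subsets_expand:
  fixes a :: "nat \<Rightarrow> complex"
  assumes fin: "finite A"
  shows "(\<Prod>m\<in>A. x + a m) = (\<Sum>k\<le>card A. (\<Sum>S\<in>{S. S\<subseteq>A \<and> card S = card A - k}. \<Prod>m\<in>S. a m) * x^k)"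
proof -
  have "(\<Prod>m\<in>A. x + a m) = (\<Prod>m\<in>A. a m + x)" by (simp add: add.commute)
  also have "\<dots> = (\<Sum>X\<in>Pow A. (\<Prod>m\<in>X. a m) * (\<Prod>m\<in>A-X. x))" by (rule prod_add[OF fin])
  also have "\<dots> = (\<Sum>X\<in>Pow A. (\<Prod>m\<in>X. a m) * x^(card A - card X))"
  proof (rule sum.cong[OF refl])
    fix X assume "X \<in> Pow A"
    then have "card (A - X) = card A - card X" using fin by (simp add: card_Diff_subset finite_subset)
    then show "(\<Prod>m\<in>X. a m) * (\<Prod>m\<in>A-X. x) = (\<Prod>m\<in>X. a m) * x^(card A - card X)" by simp
  qed
  also have "\<dots> = (\<Sum>k\<le>card A. \<Sum>X\<in>{X. X\<in>Pow A \<and> card A - card X = k}. (\<Prod>m\<in>X. a m) * x^(card A - card X))"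
    by (rule sum.group[symmetric]) (use fin in auto)
  also have "\<dots> = (\<Sum>k\<le>card A. (\<Sum>S\<in>{S. S\<subseteq>A \<and> card S = card A - k}. \<Prod>m\<in>S. a m) * x^k)"
  proof (rule sum.cong[OF refl])
    fix k assume k: "k \<in> {..card A}"
    have eq: "{X. X\<in>Pow A \<and> card A - card X = k} = {S. S\<subseteq>A \<and> card S = card A - k}"
    proof (intro set_eqI iffI)
      fix X assume "X \<in> {X. X\<in>Pow A \<and> card A - card X = k}"
      then show "X \<in> {S. S\<subseteq>A \<and> card S = card A - k}" using card_mono[OF fin, of X] by auto
    next
      fix X assume "X \<in> {S. S\<subseteq>A \<and> card S = card A - k}"
      then show "X \<in> {X. X\<in>Pow A \<and> card A - card X = k}" using k by auto
    qed
    have kk: "card A - (card A - k) = k" using k by auto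
    show "(\<Sum>X\<in>{X. X\<in>Pow A \<and> card A - card X = k}. (\<Prod>m\<in>X. a m) * x^(card A - card X)) =
      (\<Sum>S\<in>{S. S\<subseteq>A \<and> card S = card A - k}. \<Prod>m\<in>S. a m) * x^k"
      unfolding eq sum_distrib_right by (rule sum.cong[OF refl]) (simp add: kk)
  qed
  finally show ?thesis .
qed

lemma key:
  fixes z :: complex
  assumes "l \<le> n"
  shows "(\<Sum>S\<in>{S. S\<subseteq>{1..n} \<and> card S = n - l}. \<Prod>m\<in>S. (of_nat m - z)) =
    (\<Sum>j=l..n. of_nat (j choose l) * of_nat (stirling (Suc n) (Suc j)) * (-z)^(j-l))"
proof -
  define e where "e k = (\<Sum>S\<in>{S. S\<subseteq>{1..n} \<and> card S = n - k}. \<Prod>m\<in>S. (of_nat m - z))" for k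
  define c where "c k = (\<Sum>j=k..n. of_nat (j choose k) * of_nat (stirling (Suc n) (Suc j)) * (-z)^(j-k))" for k
  define s where "s j = (of_nat (stirling (Suc n) (Suc j)) :: complex)" for j
  have "(\<Sum>k\<le>n. e k * x^k) = (\<Sum>k\<le>n. c k * x^k)" for x :: complex
  proof -
    have "(\<Sum>k\<le>n. e k * x^k) = (\<Prod>m\<in>{1..n}. x + (of_nat m - z))"
      using subsets_expand[of "{1..n}" x "\<lambda>m. of_nat m - z"] by (simp add: e_def)
    also have "\<dots> = pochhammer ((x - z) + 1) n"
      unfolding pochhammer_prod atLeast0LessThan One_nat_def prod.atLeast1_atMost_eq
      by (rule prod.cong[OF refl]) (simp add: algebra_simps)
    also have "\<dots> = (\<Sum>j\<le>n. s j * (x + (-z))^j)" by (simp add: poch_stir s_def)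
    also have "\<dots> = (\<Sum>j\<le>n. \<Sum>k\<le>j. s j * (of_nat (j choose k) * x^k * (-z)^(j-k)))"
      by (simp only: binomial_ring sum_distrib_left)
    also have "\<dots> = (\<Sum>j\<le>n. \<Sum>k\<le>n. s j * (of_nat (j choose k) * x^k * (-z)^(j-k)))"
    proof (rule sum.cong[OF refl])
      fix j assume "j \<in> {..n}"
      then show "(\<Sum>k\<le>j. s j * (of_nat (j choose k) * x^k * (-z)^(j-k))) = (\<Sum>k\<le>n. s j * (of_nat (j choose k) * x^k * (-z)^(j-k)))"
        by (intro sum.mono_neutral_left) auto
    qed
    also have "\<dots> = (\<Sum>k\<le>n. \<Sum>j\<le>n. s j * (of_nat (j choose k) * x^k * (-z)^(j-k)))"
      by (rule sum.swap)
    also have "\<dots> = (\<Sum>k\<le>n. c k * x^k)"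
    proof (rule sum.cong[OF refl])
      fix k assume "k \<in> {..n}"
      have "(\<Sum>j\<le>n. s j * (of_nat (j choose k) * x^k * (-z)^(j-k))) = (\<Sum>j=k..n. s j * (of_nat (j choose k) * x^k * (-z)^(j-k)))"
        by (intro sum.mono_neutral_right) auto
      also have "\<dots> = c k * x^k"
        by (simp add: c_def s_def sum_distrib_right sum_distrib_left mult_ac del: stirling.simps)
      finally show "(\<Sum>j\<le>n. s j * (of_nat (j choose k) * x^k * (-z)^(j-k))) = c k * x^k" .
    qed
    finally show ?thesis .
  qed
  then have "\<forall>k\<le>n. e k = c k" using polyfun_eq_coeffs[of e n c] by blast
  then show ?thesis using assms by (simp add: e_def c_def)
qed

lemma qfact_lim: "((\<lambda>q. qfact q n) \<longlongrightarrow> fact n) (at_left (1::real))"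
proof -
  have "((\<lambda>q. qfact q n) \<longlongrightarrow> (\<Prod>k=1..n. of_nat k :: complex)) (at_left (1::real))"
    unfolding qfact_def by (intro tendsto_prod qnum_lim)
  moreover have "(\<Prod>k=1..n. of_nat k :: complex) = fact n" by (simp add: fact_prod)
  ultimately show ?thesis by simp
qed

theorem lemma3p3:
  fixes r l :: nat and z :: complex
  assumes "r \<ge> 1" and "l \<le> r - 1"
  shows "((\<lambda>q. Pq q r l z) \<longlongrightarrow> Pclass r l z) (at_left 1)"
proof -
  define n where "n = r - 1"
  have r: "r = Suc n" using assms(1) by (simp add: n_def)
  have ln: "l \<le> n" using assms(2) by (simp add: n_def)
  have fnz: "(fact n :: complex) \<noteq> 0" by simp
  show ?thesis
  proof (cases "l = n")
    case True
    have "Pclass r l z = 1 / fact n" using True by (simp add: Pclass_def r)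
    moreover have "(\<lambda>q. Pq q r l z) = (\<lambda>q. 1 / qfact q n)" using True by (simp add: Pq_def r)
    moreover have "((\<lambda>q. 1 / qfact q n) \<longlongrightarrow> 1 / fact n) (at_left 1)"
      by (intro tendsto_divide tendsto_const qfact_lim fnz)
    ultimately show ?thesis by simp
  next
    case False
    define F where "F = {S. S \<subseteq> {1..n} \<and> card S = n - l}"
    have P: "(\<lambda>q. Pq q r l z) = (\<lambda>q. (-1) ^ (n - l) / qfact q n *
        (\<Sum>S\<in>F. complex_of_real (q ^ (\<Sum>S)) * (\<Prod>m\<in>S. qnum q (z - of_nat m))))"
      using False by (simp add: Pq_def r F_def)
    have lim: "((\<lambda>q. (-1) ^ (n - l) / qfact q n *
        (\<Sum>S\<in>F. complex_of_real (q ^ (\<Sum>S)) * (\<Prod>m\<in>S. qnum q (z - of_nat m)))) \<longlongrightarrow>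
        (-1) ^ (n - l) / fact n * (\<Sum>S\<in>F. complex_of_real (1 ^ (\<Sum>S)) * (\<Prod>m\<in>S. (z - of_nat m)))) (at_left 1)"
      by (intro tendsto_intros qfact_lim fnz qnum_lim)
    have "(-1) ^ (n - l) * (\<Sum>S\<in>F. complex_of_real (1 ^ (\<Sum>S)) * (\<Prod>m\<in>S. (z - of_nat m))) =
        (\<Sum>S\<in>F. (\<Prod>m\<in>S. (of_nat m - z)))"
      unfolding sum_distrib_left
    proof (rule sum.cong[OF refl])
      fix S assume "S \<in> F"
      then have c: "card S = n - l" by (simp add: F_def)
      have "(\<Prod>m\<in>S. (of_nat m - z)) = (\<Prod>m\<in>S. (-1) * (z - of_nat m))" by simp
      also have "\<dots> = (-1) ^ card S * (\<Prod>m\<in>S. (z - of_nat m))" by (simp only: prod.distrib prod_constant)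
      finally show "(-1) ^ (n - l) * (complex_of_real (1 ^ (\<Sum>S)) * (\<Prod>m\<in>S. (z - of_nat m))) = (\<Prod>m\<in>S. (of_nat m - z))"
        using c by simp
    qed
    also have "\<dots> = (\<Sum>j=l..n. of_nat (j choose l) * of_nat (stirling (Suc n) (Suc j)) * (-z)^(j-l))"
      unfolding F_def by (rule key[OF ln])
    finally have "(-1) ^ (n - l) / fact n * (\<Sum>S\<in>F. complex_of_real (1 ^ (\<Sum>S)) * (\<Prod>m\<in>S. (z - of_nat m))) = Pclass r l z"
      by (simp add: Pclass_def r del: stirling.simps)
    then show ?thesis using P lim by simp
  qed
qed

end
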